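(* Let $R_1,\dots,R_T:\mathcal{X}\to\mathcal{Y}^m$ be randomizers such that each shuffled protocol $\Pi_t=(R_t,S)$ is $(\varepsilon,\delta)$-differentially private in the shuffled model, and define $\widetilde R:\mathcal{X}\to\mathcal{Y}^{mT}$ by $\widetilde R(x)=(R_1(x),\dots,R_T(x))$ (independent randomness). Then for every $\delta'>0$, the composed protocol $\widetilde\Pi=(\widetilde R,S)$ is $(\varepsilon',\delta'+T\delta)$-differentially private in the shuffled model, where $\varepsilon'=\varepsilon(e^\varepsilon-1)T+\varepsilon\sqrt{2T\log(1/\delta')}$.
   Context: An algorithm $M$ on datasets $X\in\mathcal{X}^n$ is $(\varepsilon,\delta)$-differentially private if for all $X,X'$ differing in one user's entry and every output set $T$, $\Pr[M(X)\in T]\le e^\varepsilon\Pr[M(X')\in T]+\delta$. In the shuffled model with $n$ users, for a randomizer $R:\mathcal{X}\to\mathcal{Y}^m$ the shuffler $S$ takes all $nm$ messages $R(x_1),\dots,R(x_n)$ and outputs them in a uniformly random order; $(R,S)$ is $(\varepsilon,\delta)$-differentially private in the shuffled model if $(x_1,\dots,x_n)\mapsto S(R(x_1),\dots,R(x_n))$ is $(\varepsilon,\delta)$-differentially private. $\log$ is the natural logarithm. *)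

theory Defs
  imports "HOL-Probability.Probability" "HOL-Combinatorics.Permutations"
begin

fun pmf_list :: "'a pmf list \<Rightarrow> 'a list pmf" where
  "pmf_list [] = return_pmf []"
| "pmf_list (p # ps) = bind_pmf p (\<lambda>x. bind_pmf (pmf_list ps) (\<lambda>xs. return_pmf (x # xs)))"

definition neighbours :: "'x list \<Rightarrow> 'x list \<Rightarrow> bool" where
  "neighbours X X' \<longleftrightarrow> length X = length X' \<and>
     (\<exists>i<length X. \<forall>j<length X. j \<noteq> i \<longrightarrow> X ! j = X' ! j)"

definition diff_private :: "nat \<Rightarrow> ('x list \<Rightarrow> 'o pmf) \<Rightarrow> real \<Rightarrow> real \<Rightarrow> bool" where
  "diff_private n M eps delta \<longleftrightarrow>
     (\<forall>X X' T. length X = n \<longrightarrow> neighbours X X' \<longrightarrow>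
        measure_pmf.prob (M X) T \<le> exp eps * measure_pmf.prob (M X') T + delta)"

definition shuffle :: "'y list \<Rightarrow> 'y list pmf" where
  "shuffle ys = map_pmf (\<lambda>\<pi>. map (\<lambda>i. ys ! \<pi> i) [0..<length ys])
                   (pmf_of_set {\<pi>. \<pi> permutes {0..<length ys}})"

definition shuffled :: "('x \<Rightarrow> 'y list pmf) \<Rightarrow> 'x list \<Rightarrow> 'y list pmf" where
  "shuffled R X = bind_pmf (pmf_list (map R X)) (\<lambda>yss. shuffle (concat yss))"

definition shuffled_dp :: "nat \<Rightarrow> ('x \<Rightarrow> 'y list pmf) \<Rightarrow> real \<Rightarrow> real \<Rightarrow> bool" where
  "shuffled_dp n R eps delta \<longleftrightarrow> diff_private n (shuffled R) eps delta"

definition compose_rand :: "(nat \<Rightarrow> 'x \<Rightarrow> 'y list pmf) \<Rightarrow> nat \<Rightarrow> 'x \<Rightarrow> 'y list pmf" where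
  "compose_rand R T x = map_pmf concat (pmf_list (map (\<lambda>t. R t x) [0..<T]))"

end

theory Submission
  imports Defs
begin

lemma perms_ne: "{\<pi>. \<pi> permutes A} \<noteq> {}"
  using permutes_id by blast

lemma setP: "set_pmf (pmf_of_set {\<pi>. \<pi> permutes {..<n::nat}}) = {\<pi>. \<pi> permutes {..<n}}"
  by (rule set_pmf_of_set[OF perms_ne finite_permutations]) simp

lemma shuffle_alt: "shuffle ys = map_pmf (\<lambda>\<pi>. permute_list \<pi> ys) (pmf_of_set {\<pi>. \<pi> permutes {..<length ys}})"
  unfolding shuffle_def permute_list_def by (simp add: atLeast0LessThan)

lemma set_shuffle: "zs \<in> set_pmf (shuffle ys) \<Longrightarrow> mset zs = mset ys"
  unfolding shuffle_alt
  by (auto simp: setP)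

lemma shuffle_mset:
  assumes "mset xs = mset ys"
  shows "shuffle xs = shuffle ys"
proof -
  obtain s where s: "s permutes {..<length ys}" "permute_list s ys = xs"
    using mset_eq_permutation[OF assms] by blast
  have len: "length xs = length ys" using s by auto
  let ?P = "{\<pi>. \<pi> permutes {..<length ys}}"
  have bij: "bij_betw (\<lambda>\<pi>. s \<circ> \<pi>) ?P ?P"
  proof (rule bij_betwI[where g="\<lambda>\<pi>. inv s \<circ> \<pi>"])
    show "(\<circ>) s \<in> ?P \<rightarrow> ?P" using s(1) by (auto intro: permutes_compose)
    show "(\<lambda>\<pi>. inv s \<circ> \<pi>) \<in> ?P \<rightarrow> ?P" using s(1) by (auto intro: permutes_compose permutes_inv)
    show "inv s \<circ> (s \<circ> x) = x" for x :: "nat \<Rightarrow> nat" using s(1)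
      by (simp add: o_assoc permutes_inv_o(2))
    show "s \<circ> (inv s \<circ> y) = y" for y :: "nat \<Rightarrow> nat" using s(1)
      by (simp add: o_assoc permutes_inv_o(1))
  qed
  have "shuffle xs = map_pmf (\<lambda>\<pi>. permute_list \<pi> (permute_list s ys)) (pmf_of_set ?P)"
    unfolding shuffle_alt using s len by simp
  also have "\<dots> = map_pmf (\<lambda>\<pi>. permute_list (s \<circ> \<pi>) ys) (pmf_of_set ?P)"
    by (rule map_pmf_cong) (auto simp: permute_list_compose setP)
  also have "\<dots> = map_pmf (\<lambda>\<pi>. permute_list \<pi> ys) (map_pmf (\<lambda>\<pi>. s \<circ> \<pi>) (pmf_of_set ?P))"
    by (simp add: pmf.map_comp o_def)
  also have "map_pmf (\<lambda>\<pi>. s \<circ> \<pi>) (pmf_of_set ?P) = pmf_of_set ?P"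
    by (rule map_pmf_of_set_bij_betw[OF bij]) (auto simp: finite_permutations intro: exI[of _ id] permutes_id)
  finally show ?thesis unfolding shuffle_alt .
qed

lemma set_pmf_list: "ys \<in> set_pmf (pmf_list ps) \<Longrightarrow> list_all2 (\<lambda>y p. y \<in> set_pmf p) ys ps"
  by (induction ps arbitrary: ys) auto

lemma set_pmf_list_length: "ys \<in> set_pmf (pmf_list ps) \<Longrightarrow> length ys = length ps"
  using set_pmf_list list_all2_lengthD by blast

lemma pmf_list_map: "pmf_list (map (map_pmf g) ps) = map_pmf (map g) (pmf_list ps)"
  by (induction ps) (simp_all add: map_bind_pmf bind_map_pmf map_pmf_def bind_assoc_pmf bind_return_pmf)

lemma pmf_list_bind:
  assumes "length ps = length Ks"
  shows "pmf_list (map2 bind_pmf ps Ks) = bind_pmf (pmf_list ps) (\<lambda>ys. pmf_list (map2 (\<lambda>K y. K y) Ks ys))"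
  using assms
proof (induction ps Ks rule: list_induct2)
  case Nil then show ?case by (simp add: bind_return_pmf)
next
  case (Cons p ps K Ks)
  show ?case
    apply (simp add: Cons.IH bind_assoc_pmf bind_return_pmf)
    apply (rule bind_pmf_cong[OF refl])
    apply (subst bind_commute_pmf)
    apply simp
    done
qed

lemma pmf_list_Cons': "pmf_list (p # ps) = bind_pmf p (\<lambda>x. map_pmf (Cons x) (pmf_list ps))"
  by (simp add: map_pmf_def)

lemma pmf_list_map2_Cons:
  assumes "length Ps = length ys"
  shows "pmf_list (map2 (\<lambda>P y. map_pmf (Cons y) P) Ps ys) = map_pmf (map2 Cons ys) (pmf_list Ps)"
  using assms
proof (induction Ps ys rule: list_induct2)
  case Nil then show ?case by simp
next
  case (Cons P Ps y ys)
  show ?case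
    by (simp add: Cons.IH pmf_list_Cons' bind_map_pmf map_bind_pmf pmf.map_comp o_def del: pmf_list.simps)
qed

lemma pmf_list_Z:
  assumes "length ps = length Ps"
  shows "pmf_list (map2 (\<lambda>p P. bind_pmf p (\<lambda>y. map_pmf (Cons y) P)) ps Ps)
       = bind_pmf (pmf_list ps) (\<lambda>ys. map_pmf (map2 Cons ys) (pmf_list Ps))"
proof -
  have "map2 (\<lambda>p P. bind_pmf p (\<lambda>y. map_pmf (Cons y) P)) ps Ps
        = map2 bind_pmf ps (map (\<lambda>P y. map_pmf (Cons y) P) Ps)"
    using assms by (induction ps Ps rule: list_induct2) auto
  also have "pmf_list \<dots> = bind_pmf (pmf_list ps) (\<lambda>ys. pmf_list (map2 (\<lambda>K y. K y) (map (\<lambda>P y. map_pmf (Cons y) P) Ps) ys))"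
    by (rule pmf_list_bind) (simp add: assms)
  also have "\<dots> = bind_pmf (pmf_list ps) (\<lambda>ys. map_pmf (map2 Cons ys) (pmf_list Ps))"
  proof (rule bind_pmf_cong[OF refl])
    fix ys assume "ys \<in> set_pmf (pmf_list ps)"
    then have len: "length ys = length Ps" using set_pmf_list_length assms by metis
    have "map2 (\<lambda>K y. K y) (map (\<lambda>P y. map_pmf (Cons y) P) Ps) ys = map2 (\<lambda>P y. map_pmf (Cons y) P) Ps ys"
      using len[symmetric] by (induction Ps ys rule: list_induct2) auto
    then show "pmf_list (map2 (\<lambda>K y. K y) (map (\<lambda>P y. map_pmf (Cons y) P) Ps) ys) = map_pmf (map2 Cons ys) (pmf_list Ps)"
      using pmf_list_map2_Cons[OF len[symmetric]] by simp
  qed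
  finally show ?thesis .
qed

definition tr :: "nat \<Rightarrow> 'a list list \<Rightarrow> 'a list list" where
  "tr T N = map (\<lambda>k. map (\<lambda>r. r ! k) N) [0..<T]"

lemma length_tr[simp]: "length (tr T A) = T"
  by (simp add: tr_def)

lemma tr_Cons: "length r = T \<Longrightarrow> tr T (r # A) = map2 Cons r (tr T A)"
  unfolding tr_def by (rule nth_equalityI) auto

lemma pmf_list_return: "pmf_list (map (\<lambda>k. return_pmf (f k)) xs) = return_pmf (map f xs)"
  by (induction xs) (simp_all add: bind_return_pmf)

lemma map_pmf_list_Cons: "length r = length M \<Longrightarrow> map pmf_list (map2 Cons r M) = map2 (\<lambda>p P. bind_pmf p (\<lambda>y. map_pmf (Cons y) P)) r (map pmf_list M)"
  by (induction r M rule: list_induct2) (auto simp: pmf_list_Cons' simp del: pmf_list.simps)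

lemma swap:
  assumes "\<forall>r\<in>set A. length r = T"
  shows "pmf_list (map pmf_list (tr T A)) = map_pmf (tr T) (pmf_list (map pmf_list A))"
  using assms
proof (induction A)
  case Nil
  have "tr T ([] :: 'a pmf list list) = map (\<lambda>k. []) [0..<T]" by (simp add: tr_def)
  then show ?case by (simp add: tr_def pmf_list_return[where f="\<lambda>k. []", simplified])
next
  case (Cons r A)
  have lr: "length r = T" using Cons.prems by simp
  have "pmf_list (map pmf_list (tr T (r # A))) = pmf_list (map2 (\<lambda>p P. bind_pmf p (\<lambda>y. map_pmf (Cons y) P)) r (map pmf_list (tr T A)))"
    using lr by (simp only: tr_Cons map_pmf_list_Cons length_tr)
  also have "\<dots> = bind_pmf (pmf_list r) (\<lambda>ys. map_pmf (map2 Cons ys) (pmf_list (map pmf_list (tr T A))))"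
    by (rule pmf_list_Z) (simp add: lr)
  also have "\<dots> = bind_pmf (pmf_list r) (\<lambda>ys. map_pmf (map2 Cons ys) (map_pmf (tr T) (pmf_list (map pmf_list A))))"
    using Cons by simp
  also have "\<dots> = bind_pmf (pmf_list r) (\<lambda>ys. map_pmf (\<lambda>N. tr T (ys # N)) (pmf_list (map pmf_list A)))"
  proof (rule bind_pmf_cong[OF refl])
    fix ys assume "ys \<in> set_pmf (pmf_list r)"
    then have "length ys = T" using set_pmf_list_length lr by metis
    then show "map_pmf (map2 Cons ys) (map_pmf (tr T) (pmf_list (map pmf_list A))) = map_pmf (\<lambda>N. tr T (ys # N)) (pmf_list (map pmf_list A))"
      by (simp add: pmf.map_comp o_def tr_Cons)
  qed
  also have "\<dots> = map_pmf (tr T) (pmf_list (map pmf_list (r # A)))"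
    by (simp add: pmf_list_Cons' map_bind_pmf pmf.map_comp o_def del: pmf_list.simps)
  finally show ?case .
qed

lemma ms1: "zs \<in> set_pmf (pmf_list (map (\<lambda>yss. shuffle (concat yss)) M)) \<Longrightarrow> mset (concat zs) = mset (concat (map concat M))"
  by (induction M arbitrary: zs) (auto dest: set_shuffle)

lemma ms_map2: "length r = length M \<Longrightarrow> mset (concat (map concat (map2 Cons r M))) = mset (concat r) + mset (concat (map concat M))"
  by (induction r M rule: list_induct2) (auto simp: ac_simps)

lemma ms2: "\<forall>r\<in>set N. length r = T \<Longrightarrow> mset (concat (map concat (tr T N))) = mset (concat (map concat N))"
proof (induction N)
  case Nil then show ?case by (simp add: tr_def)
next
  case (Cons r N)
  then have lr: "length r = T" by simp
  have "mset (concat (map concat (tr T (r # N)))) = mset (concat r) + mset (concat (map concat (tr T N)))"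
    using lr by (simp only: tr_Cons ms_map2 length_tr)
  then show ?case using Cons by simp
qed

lemma rows_len:
  assumes "N \<in> set_pmf (pmf_list (map pmf_list A))" "\<forall>r\<in>set A. length r = T"
  shows "\<forall>r\<in>set N. length r = T"
proof
  fix r assume "r \<in> set N"
  then obtain i where i: "i < length N" "r = N ! i" by (auto simp: in_set_conv_nth)
  have la: "list_all2 (\<lambda>y p. y \<in> set_pmf p) N (map pmf_list A)" using set_pmf_list[OF assms(1)] .
  then have "length N = length A" by (simp add: list_all2_lengthD)
  moreover have "r \<in> set_pmf (pmf_list (A ! i))" using la i by (auto simp: list_all2_conv_all_nth)
  ultimately show "length r = T" using assms(2) i set_pmf_list_length by (metis nth_mem)
qed

lemma shuffled_compose:
  fixes R :: "nat \<Rightarrow> 'x \<Rightarrow> 'y list pmf"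
  shows "shuffled (compose_rand R T) X = bind_pmf (pmf_list (map (\<lambda>t. shuffled (R t) X) [0..<T])) (\<lambda>zs. shuffle (concat zs))"
proof -
  define A where "A = map (\<lambda>x. map (\<lambda>t. R t x) [0..<T]) X"
  have rl: "\<forall>r\<in>set A. length r = T" by (simp add: A_def)
  define K0 :: "'y list list \<Rightarrow> 'y list pmf" where "K0 = (\<lambda>yss. shuffle (concat yss))"
  have "shuffled (compose_rand R T) X = bind_pmf (pmf_list (map (map_pmf concat) (map pmf_list A))) K0"
    by (simp add: shuffled_def compose_rand_def[abs_def] A_def K0_def o_def del: pmf_list.simps)
  also have "\<dots> = bind_pmf (pmf_list (map pmf_list A)) (\<lambda>N. shuffle (concat (map concat N)))"
    by (simp only: pmf_list_map bind_map_pmf K0_def)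
  finally have L: "shuffled (compose_rand R T) X = \<dots>" .
  have "map (\<lambda>t. shuffled (R t) X) [0..<T] = map2 bind_pmf (map pmf_list (tr T A)) (replicate T K0)"
    by (rule nth_equalityI) (auto simp: shuffled_def K0_def tr_def A_def o_def)
  then have "bind_pmf (pmf_list (map (\<lambda>t. shuffled (R t) X) [0..<T])) K0
      = bind_pmf (bind_pmf (pmf_list (map pmf_list (tr T A))) (\<lambda>M. pmf_list (map2 (\<lambda>K y. K y) (replicate T K0) M))) K0"
    by (simp add: pmf_list_bind del: pmf_list.simps)
  also have "\<dots> = bind_pmf (pmf_list (map pmf_list A)) (\<lambda>N. bind_pmf (pmf_list (map2 (\<lambda>K y. K y) (replicate T K0) (tr T N))) K0)"
    by (simp add: swap[OF rl] bind_assoc_pmf bind_map_pmf del: pmf_list.simps)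
  also have "\<dots> = bind_pmf (pmf_list (map pmf_list A)) (\<lambda>N. shuffle (concat (map concat N)))"
  proof (rule bind_pmf_cong[OF refl])
    fix N assume N: "N \<in> set_pmf (pmf_list (map pmf_list A))"
    have e: "map2 (\<lambda>K y. K y) (replicate T K0) (tr T N) = map K0 (tr T N)"
      by (rule nth_equalityI) auto
    have "bind_pmf (pmf_list (map K0 (tr T N))) K0 = bind_pmf (pmf_list (map K0 (tr T N))) (\<lambda>_. shuffle (concat (map concat N)))"
    proof (rule bind_pmf_cong[OF refl])
      fix zs assume "zs \<in> set_pmf (pmf_list (map K0 (tr T N)))"
      then have "mset (concat zs) = mset (concat (map concat N))"
        using ms1[of zs "tr T N"] ms2[OF rows_len[OF N rl]] unfolding K0_def by simp
      then show "K0 zs = shuffle (concat (map concat N))" unfolding K0_def by (rule shuffle_mset)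
    qed
    then show "bind_pmf (pmf_list (map2 (\<lambda>K y. K y) (replicate T K0) (tr T N))) K0 = shuffle (concat (map concat N))"
      using e by simp
  qed
  finally show ?thesis using L by (simp add: K0_def)
qed

lemma pmf_list_Cons_pair: "pmf_list (p # ps) = map_pmf (\<lambda>(x,xs). x # xs) (pair_pmf p (pmf_list ps))"
  by (simp add: pair_pmf_def map_bind_pmf bind_assoc_pmf bind_return_pmf)

lemma pmf_pmf_list:
  "pmf (pmf_list ps) ys = (if length ys = length ps then (\<Prod>i<length ps. pmf (ps ! i) (ys ! i)) else 0)"
proof (induction ps arbitrary: ys)
  case Nil then show ?case by (cases ys) (auto simp: pmf_return)
next
  case (Cons p ps)
  have inj: "inj (\<lambda>(x::'a, xs). x # xs)" by (auto simp: inj_def)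
  show ?case
  proof (cases ys)
    case Nil
    have "[] \<notin> set_pmf (pmf_list (p # ps))" using set_pmf_list_length by fastforce
    then show ?thesis using Nil by (simp add: set_pmf_iff del: pmf_list.simps)
  next
    case (Cons y ys')
    have "pmf (pmf_list (p # ps)) ys = pmf (pair_pmf p (pmf_list ps)) (y, ys')"
      unfolding pmf_list_Cons_pair Cons using pmf_map_inj'[OF inj, of _ "(y, ys')"] by simp
    also have "\<dots> = pmf p y * pmf (pmf_list ps) ys'" by (simp add: pmf_pair)
    finally show ?thesis using Cons.IH[of ys'] Cons
      by (simp add: prod.lessThan_Suc_shift del: pmf_list.simps prod.lessThan_Suc)
  qed
qed

lemma nn_integral_pmf_list_prod:
  "(\<integral>\<^sup>+ys. (\<Prod>i<length ps. g i (ys ! i)) \<partial>measure_pmf (pmf_list ps)) = (\<Prod>i<length ps. \<integral>\<^sup>+y. g i y \<partial>measure_pmf (ps ! i))"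
proof (induction ps arbitrary: g)
  case Nil then show ?case by simp
next
  case (Cons p ps)
  have "(\<integral>\<^sup>+ys. (\<Prod>i<length (p # ps). g i (ys ! i)) \<partial>measure_pmf (pmf_list (p # ps)))
      = (\<integral>\<^sup>+x. (\<integral>\<^sup>+xs. g 0 x * (\<Prod>i<length ps. g (Suc i) (xs ! i)) \<partial>measure_pmf (pmf_list ps)) \<partial>measure_pmf p)"
    by (simp add: prod.lessThan_Suc_shift del: prod.lessThan_Suc)
  also have "\<dots> = (\<integral>\<^sup>+x. g 0 x * (\<Prod>i<length ps. \<integral>\<^sup>+y. g (Suc i) y \<partial>measure_pmf (ps ! i)) \<partial>measure_pmf p)"
    by (simp add: nn_integral_cmult Cons.IH[of "\<lambda>i. g (Suc i)"])
  also have "\<dots> = (\<integral>\<^sup>+x. g 0 x \<partial>measure_pmf p) * (\<Prod>i<length ps. \<integral>\<^sup>+y. g (Suc i) y \<partial>measure_pmf (ps ! i))"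
    by (simp add: nn_integral_multc)
  also have "\<dots> = (\<Prod>i<length (p # ps). \<integral>\<^sup>+y. g i y \<partial>measure_pmf ((p # ps) ! i))"
    by (simp add: prod.lessThan_Suc_shift del: prod.lessThan_Suc)
  finally show ?case .
qed

lemma nn_pmf_ind: "(\<integral>\<^sup>+y. ennreal (pmf q y * indicator A y) \<partial>count_space UNIV) = ennreal (measure_pmf.prob q A)"
proof -
  have "(\<integral>\<^sup>+y. ennreal (pmf q y * indicator A y) \<partial>count_space UNIV) = (\<integral>\<^sup>+y. ennreal (pmf q y) * indicator A y \<partial>count_space UNIV)"
    by (rule nn_integral_cong) (simp split: split_indicator)
  also have "\<dots> = (\<integral>\<^sup>+y. indicator A y \<partial>measure_pmf q)"
    by (simp add: nn_integral_measure_pmf)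
  also have "\<dots> = emeasure (measure_pmf q) A" by simp
  finally show ?thesis by (simp add: measure_pmf.emeasure_eq_measure)
qed

lemma nn_pmf_one: "(\<integral>\<^sup>+y. ennreal (pmf q y) \<partial>count_space UNIV) = 1"
  using nn_pmf_ind[of q UNIV] by simp

lemma hs_lower:
  fixes p q :: "'a pmf"
  assumes "a \<ge> 0" "\<And>S. measure_pmf.prob p S \<le> a * measure_pmf.prob q S + \<delta>"
  shows "ennreal (1 - \<delta>) \<le> (\<integral>\<^sup>+y. ennreal (min (pmf p y) (a * pmf q y)) \<partial>count_space UNIV)"
proof -
  define A where "A = {y. pmf p y > a * pmf q y}"
  let ?I = "(\<integral>\<^sup>+y. ennreal (min (pmf p y) (a * pmf q y)) \<partial>count_space UNIV)"
  have "(\<integral>\<^sup>+y. ennreal (pmf p y + a * (pmf q y * indicator A y)) \<partial>count_space UNIV)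
      = (\<integral>\<^sup>+y. ennreal (min (pmf p y) (a * pmf q y) + pmf p y * indicator A y) \<partial>count_space UNIV)"
    by (rule nn_integral_cong) (auto simp: A_def add.commute split: split_indicator)
  moreover have "(\<integral>\<^sup>+y. ennreal (pmf p y + a * (pmf q y * indicator A y)) \<partial>count_space UNIV)
      = 1 + ennreal a * ennreal (measure_pmf.prob q A)"
    using assms(1)
    by (simp add: ennreal_plus ennreal_mult nn_integral_add nn_integral_cmult nn_pmf_one nn_pmf_ind[symmetric])
  moreover have "(\<integral>\<^sup>+y. ennreal (min (pmf p y) (a * pmf q y) + pmf p y * indicator A y) \<partial>count_space UNIV)
      = ?I + ennreal (measure_pmf.prob p A)"
    using assms(1)
    by (simp add: ennreal_plus nn_integral_add nn_pmf_ind[symmetric])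
  ultimately have eq: "1 + ennreal (a * measure_pmf.prob q A) = ?I + ennreal (measure_pmf.prob p A)"
    using assms(1) by (simp add: ennreal_mult)
  have "?I \<le> (\<integral>\<^sup>+y. ennreal (pmf p y) \<partial>count_space UNIV)"
    by (rule nn_integral_mono) simp
  then have "?I \<le> 1" by (simp add: nn_pmf_one)
  then obtain r where r: "?I = ennreal r" "0 \<le> r"
    by (metis ennreal_cases top.extremum_uniqueI ennreal_one_neq_top)
  have "ennreal (1 + a * measure_pmf.prob q A) = ennreal (r + measure_pmf.prob p A)"
    using eq r assms(1) by (simp add: ennreal_plus)
  then have "1 + a * measure_pmf.prob q A = r + measure_pmf.prob p A"
    using r assms(1) by (subst (asm) ennreal_inj) auto
  then have "1 - \<delta> \<le> r" using assms(2)[of A] by linarith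
  then show ?thesis using r by simp
qed

lemma fin_le:
  assumes "\<And>y. 0 \<le> f y" "\<And>y. f y \<le> pmf p y"
  obtains r where "(\<integral>\<^sup>+y. ennreal (f y) \<partial>count_space UNIV) = ennreal r" "0 \<le> r" "r \<le> 1"
proof -
  have "(\<integral>\<^sup>+y. ennreal (f y) \<partial>count_space UNIV) \<le> (\<integral>\<^sup>+y. ennreal (pmf p y) \<partial>count_space UNIV)"
    by (rule nn_integral_mono) (simp add: assms)
  then have le: "(\<integral>\<^sup>+y. ennreal (f y) \<partial>count_space UNIV) \<le> 1" by (simp add: nn_pmf_one)
  then obtain r where r: "(\<integral>\<^sup>+y. ennreal (f y) \<partial>count_space UNIV) = ennreal r" "0 \<le> r"
    by (metis ennreal_cases top.extremum_uniqueI ennreal_one_neq_top)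
  moreover have "r \<le> 1" using le r by (simp add: ennreal_le_1)
  ultimately show ?thesis using that by blast
qed

lemma trim:
  fixes p q :: "'a pmf"
  assumes eps: "eps \<ge> 0" and dl: "\<delta> < 1"
    and dp1: "\<And>S. measure_pmf.prob p S \<le> exp eps * measure_pmf.prob q S + \<delta>"
    and dp2: "\<And>S. measure_pmf.prob q S \<le> exp eps * measure_pmf.prob p S + \<delta>"
  shows "\<exists>m p'' Q'. 0 < m \<and> m \<le> 1 \<and> 1 - \<delta> \<le> m \<and> (\<forall>y. 0 \<le> Q' y \<and> Q' y \<le> pmf q y)
     \<and> ennreal m \<le> (\<integral>\<^sup>+y. ennreal (Q' y) \<partial>count_space UNIV)
     \<and> (\<forall>y. m * pmf p'' y \<le> pmf p y \<and> m * pmf p'' y \<le> exp eps * Q' y \<and> Q' y \<le> exp eps * (m * pmf p'' y))"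
proof -
  define a where "a = exp eps"
  have a1: "a \<ge> 1" using eps by (simp add: a_def)
  have aa: "1 \<le> a * a" using a1 mult_mono[of 1 a 1 a] by simp
  define U where "U y = min (pmf p y) (a * pmf q y)" for y
  define Qp where "Qp y = min (pmf q y) (a * pmf p y)" for y
  have U0: "0 \<le> U y" for y using a1 by (simp add: U_def)
  have Qp0: "0 \<le> Qp y" for y using a1 by (simp add: Qp_def)
  obtain c where c: "(\<integral>\<^sup>+y. ennreal (U y) \<partial>count_space UNIV) = ennreal c" "0 \<le> c" "c \<le> 1"
    using fin_le[of U p, OF U0] by (auto simp: U_def)
  obtain d where d: "(\<integral>\<^sup>+y. ennreal (Qp y) \<partial>count_space UNIV) = ennreal d" "0 \<le> d" "d \<le> 1"
    using fin_le[of Qp q, OF Qp0] by (auto simp: Qp_def)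
  have c1: "1 - \<delta> \<le> c"
    using hs_lower[of a p q \<delta>] a1 dp1 c by (simp add: U_def a_def ennreal_le_iff)
  have d1: "1 - \<delta> \<le> d"
    using hs_lower[of a q p \<delta>] a1 dp2 d by (simp add: Qp_def a_def ennreal_le_iff)
  define \<theta> where "\<theta> = (if c \<le> d then 1 else (d - d / a) / (c - d / a))"
  have dda: "d / a \<le> d" using a1 d(2) by (simp add: divide_le_eq mult_le_cancel_left1)
  have th0: "0 \<le> \<theta> \<and> \<theta> \<le> 1"
  proof (cases "c \<le> d")
    case True then show ?thesis by (simp add: \<theta>_def)
  next
    case False
    then have pos: "c - d / a > 0" using dda by linarith
    have n: "0 \<le> d - d / a" using dda by linarith
    have l: "d - d / a \<le> c - d / a" using False by linarith
    have "0 \<le> (d - d / a) / (c - d / a)" using n pos by (intro divide_nonneg_nonneg) auto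
    moreover have "(d - d / a) / (c - d / a) \<le> 1" using l pos by (simp only: divide_le_eq_1_pos)
    ultimately show ?thesis using False by (simp add: \<theta>_def)
  qed
  define m where "m = min c d"
  have m0: "0 < m" "m \<le> 1" "1 - \<delta> \<le> m" using c1 d1 dl c d by (auto simp: m_def)
  define P' where "P' y = (1 - \<theta>) * (Qp y / a) + \<theta> * U y" for y
  have P'0: "0 \<le> P' y" for y using th0 a1 U0 Qp0 by (simp add: P'_def)
  have mass_r: "(1 - \<theta>) / a * d + \<theta> * c = m"
  proof (cases "c \<le> d")
    case True then show ?thesis by (simp add: \<theta>_def m_def)
  next
    case False
    then have pos: "c - d / a > 0" using dda by linarith
    have e1: "(1 - \<theta>) / a * d + \<theta> * c = d / a + \<theta> * (c - d / a)" by (simp add: algebra_simps add_divide_distrib[symmetric])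
    have e2: "\<theta> * (c - d / a) = d - d / a" using pos False by (simp add: \<theta>_def)
    have "m = d" using False by (simp add: m_def)
    then show ?thesis using e1 e2 by linarith
  qed
  have "(\<integral>\<^sup>+y. ennreal (P' y) \<partial>count_space UNIV)
      = (\<integral>\<^sup>+y. ennreal ((1 - \<theta>) / a) * ennreal (Qp y) + ennreal \<theta> * ennreal (U y) \<partial>count_space UNIV)"
    using th0 a1 U0 Qp0 by (intro nn_integral_cong) (simp add: P'_def ennreal_plus ennreal_mult[symmetric])
  also have "\<dots> = ennreal ((1 - \<theta>) / a) * ennreal d + ennreal \<theta> * ennreal c"
    by (simp add: nn_integral_add nn_integral_cmult c d)
  also have "\<dots> = ennreal ((1 - \<theta>) / a * d) + ennreal (\<theta> * c)" using th0 a1 c d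
    by (simp add: ennreal_mult[symmetric])
  also have "\<dots> = ennreal ((1 - \<theta>) / a * d + \<theta> * c)" using th0 a1 c d
    by (intro ennreal_plus[symmetric]) auto
  also have "\<dots> = ennreal m" using mass_r by simp
  finally have mass: "(\<integral>\<^sup>+y. ennreal (P' y) \<partial>count_space UNIV) = ennreal m" .
  define f where "f y = P' y / m" for y
  have f0: "\<And>y. 0 \<le> f y" using P'0 m0 by (simp add: f_def)
  have f1: "(\<integral>\<^sup>+y. ennreal (f y) \<partial>count_space UNIV) = 1"
  proof -
    have "(\<integral>\<^sup>+y. ennreal (f y) \<partial>count_space UNIV) = (\<integral>\<^sup>+y. ennreal (1 / m) * ennreal (P' y) \<partial>count_space UNIV)"
      using m0 P'0 by (intro nn_integral_cong) (simp add: f_def ennreal_mult[symmetric])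
    also have "\<dots> = ennreal (1 / m) * ennreal m" by (simp add: nn_integral_cmult mass)
    also have "\<dots> = 1" using m0 by (simp add: ennreal_mult[symmetric])
    finally show ?thesis .
  qed
  define p'' where "p'' = embed_pmf f"
  have pp: "m * pmf p'' y = P' y" for y
    using m0 by (simp add: p''_def pmf_embed_pmf[OF f0 f1] f_def)
  have L_le_U: "Qp y / a \<le> U y" for y
  proof -
    have "Qp y / a \<le> pmf p y" using a1 by (simp add: Qp_def divide_le_eq mult.commute)
    moreover have "Qp y / a \<le> a * pmf q y"
    proof -
      have "Qp y \<le> pmf q y" by (simp add: Qp_def)
      also have "\<dots> \<le> a * (a * pmf q y)" using a1
        using aa by (simp add: mult.assoc[symmetric] mult_le_cancel_right1)
      finally show ?thesis using a1 by (simp add: divide_le_eq mult.commute)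
    qed
    ultimately show ?thesis by (simp add: U_def)
  qed
  have P'_ge: "Qp y / a \<le> P' y" for y
  proof -
    have "Qp y / a = (1 - \<theta>) * (Qp y / a) + \<theta> * (Qp y / a)" by (simp add: algebra_simps add_divide_distrib[symmetric])
    also have "\<dots> \<le> P' y" unfolding P'_def using th0 L_le_U[of y] by (intro add_left_mono mult_left_mono) auto
    finally show ?thesis .
  qed
  have P'_le: "P' y \<le> U y" for y
  proof -
    have "P' y \<le> (1 - \<theta>) * U y + \<theta> * U y" unfolding P'_def using th0 L_le_U[of y] by (intro add_right_mono mult_left_mono) auto
    also have "\<dots> = U y" by (simp add: algebra_simps)
    finally show ?thesis .
  qed
  have U_le: "U y \<le> a * Qp y" for y
  proof -
    have "U y \<le> a * pmf q y" by (simp add: U_def)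
    moreover have "U y \<le> a * (a * pmf p y)"
    proof -
      have "U y \<le> pmf p y" by (simp add: U_def)
      also have "\<dots> \<le> a * (a * pmf p y)" using a1
        using aa by (simp add: mult.assoc[symmetric] mult_le_cancel_right1)
      finally show ?thesis .
    qed
    ultimately show ?thesis by (simp add: Qp_def)
  qed
  show ?thesis
  proof (intro exI conjI allI)
    show "0 < m" "m \<le> 1" "1 - \<delta> \<le> m" using m0 by auto
    show "0 \<le> Qp y" "Qp y \<le> pmf q y" for y using Qp0 by (auto simp: Qp_def)
    show "ennreal m \<le> (\<integral>\<^sup>+y. ennreal (Qp y) \<partial>count_space UNIV)" using d by (simp add: m_def)
    show "m * pmf p'' y \<le> pmf p y" for y using P'_le[of y] by (simp add: pp U_def)
    show "m * pmf p'' y \<le> exp eps * Qp y" for y using P'_le[of y] U_le[of y] by (simp add: pp a_def)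
    show "Qp y \<le> exp eps * (m * pmf p'' y)" for y using P'_ge[of y] a1 by (simp add: pp a_def divide_le_eq mult.commute)
  qed
qed

lemma lnbound:
  fixes x eps :: real
  assumes eps: "eps \<ge> 0" and x: "0 < x" "exp (- eps) \<le> x" "x \<le> exp eps"
  shows "ln x \<le> eps * (exp eps - 1) + 1 - 1 / x"
proof -
  have lx: "ln x \<le> x - 1" using x by (intro ln_le_minus_one)
  have "ln x \<le> ln (exp eps)" using x by (subst ln_le_cancel_iff) auto
  then have lu: "ln x \<le> eps" by simp
  have "ln (exp (- eps)) \<le> ln x" using x by (subst ln_le_cancel_iff) auto
  then have ll: "- eps \<le> ln x" by simp
  have A: "ln x + 1 / x - 1 \<le> (x - 1) * ln x / x"
  proof -
    have "(x - 1) * ln x / x - (ln x + 1 / x - 1) = (x - 1 - ln x) / x"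
      using x by (simp add: field_simps)
    also have "\<dots> \<ge> 0" using lx x by simp
    finally show ?thesis by simp
  qed
  have ix: "1 / x \<le> exp eps"
    using x by (simp add: divide_le_eq exp_minus field_simps)
  have B: "(x - 1) * ln x / x \<le> eps * (exp eps - 1)"
  proof (cases "x \<ge> 1")
    case True
    have f1: "0 \<le> (x - 1) / x" "(x - 1) / x \<le> exp eps - 1"
    proof -
      show "0 \<le> (x - 1) / x" using True by simp
      have "(x - 1) / x = 1 - 1 / x" using x by (simp add: field_simps)
      also have "\<dots> \<le> 1 - exp (- eps)"
      proof -
        have "1 / x \<ge> exp (- eps)"
          using x by (simp add: exp_minus field_simps)
        then show ?thesis by simp
      qed
      also have "\<dots> \<le> exp eps - 1"
      proof -
        have "exp (- eps) * (exp eps - 1) \<le> 1 * (exp eps - 1)"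
          using eps by (intro mult_right_mono) auto
        then show ?thesis by (simp add: exp_minus field_simps)
      qed
      finally show "(x - 1) / x \<le> exp eps - 1" .
    qed
    have "(x - 1) * ln x / x = (x - 1) / x * ln x" by simp
    also have "\<dots> \<le> (exp eps - 1) * eps"
      using f1 lu True eps by (intro mult_mono) auto
    finally show ?thesis by (simp add: mult.commute)
  next
    case False
    have "(x - 1) * ln x / x = (1 / x - 1) * (- ln x)" using x by (simp add: field_simps)
    also have "\<dots> \<le> (exp eps - 1) * eps"
      using ix ll False x eps by (intro mult_mono) auto
    finally show ?thesis by (simp add: mult.commute)
  qed
  show ?thesis using A B by simp
qed

lemma hoef:
  fixes p'' :: "'a pmf" and Q' :: "'a \<Rightarrow> real"
  assumes eps: "eps \<ge> 0" and m: "0 < m" "m \<le> 1" and Q0: "\<And>y. 0 \<le> Q' y"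
    and Qm: "ennreal m \<le> (\<integral>\<^sup>+y. ennreal (Q' y) \<partial>count_space UNIV)"
    and r1: "\<And>y. m * pmf p'' y \<le> exp eps * Q' y" and r2: "\<And>y. Q' y \<le> exp eps * (m * pmf p'' y)"
    and lam: "lam > 0"
  shows "(\<integral>\<^sup>+y. ennreal ((m * pmf p'' y / Q' y) powr lam) \<partial>measure_pmf p'')
     \<le> ennreal (exp (lam * (eps * (exp eps - 1)) + lam\<^sup>2 * eps\<^sup>2 / 2))"
proof -
  define K where "K = eps * (exp eps - 1)"
  define l where "l y = ln (m * pmf p'' y / Q' y)" for y
  define h where "h y = Q' y / (m * pmf p'' y)" for y
  have supp: "0 < Q' y" "exp (- eps) \<le> m * pmf p'' y / Q' y" "m * pmf p'' y / Q' y \<le> exp eps"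
    if "y \<in> set_pmf p''" for y
  proof -
    have pp: "0 < m * pmf p'' y" using that m by (simp add: pmf_positive)
    show Qp: "0 < Q' y"
    proof (rule ccontr)
      assume "\<not> 0 < Q' y"
      then have "Q' y = 0" using Q0[of y] by simp
      then show False using r1[of y] pp by simp
    qed
    show "m * pmf p'' y / Q' y \<le> exp eps" using r1[of y] Qp by (simp add: divide_le_eq mult.commute)
    have "Q' y * exp (- eps) \<le> m * pmf p'' y"
      using r2[of y] by (simp add: exp_minus field_simps)
    then show "exp (- eps) \<le> m * pmf p'' y / Q' y" using Qp by (simp add: le_divide_eq mult.commute)
  qed
  have lrange: "l y \<in> {-eps..eps}" if "y \<in> set_pmf p''" for y
  proof -
    have pos: "0 < m * pmf p'' y / Q' y" using supp(1)[OF that] that m by (simp add: pmf_positive)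
    have "ln (exp (- eps)) \<le> l y" unfolding l_def using supp[OF that] pos by (subst ln_le_cancel_iff) auto
    moreover have "l y \<le> ln (exp eps)" unfolding l_def using supp[OF that] pos by (subst ln_le_cancel_iff) auto
    ultimately show ?thesis by simp
  qed
  interpret B: interval_bounded_random_variable "measure_pmf p''" l "-eps" eps
  proof unfold_locales
    show "l \<in> borel_measurable (measure_pmf p'')" by simp
    show "AE y in measure_pmf p''. l y \<in> {-eps..eps}" by (rule AE_pmfI) (rule lrange)
  qed
  have lb: "l y \<le> K + 1 - h y" if "y \<in> set_pmf p''" for y
  proof -
    have pos: "0 < m * pmf p'' y / Q' y" using supp(1)[OF that] that m by (simp add: pmf_positive)
    have "l y \<le> K + 1 - 1 / (m * pmf p'' y / Q' y)"
      unfolding l_def K_def by (rule lnbound[OF eps pos supp(2,3)[OF that]])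
    then show ?thesis by (simp add: h_def)
  qed
  have hb: "norm (h y) \<le> exp eps" if "y \<in> set_pmf p''" for y
  proof -
    have pp: "0 < m * pmf p'' y" using that m by (simp add: pmf_positive)
    then show ?thesis using r2[of y] Q0[of y] by (simp add: h_def divide_le_eq)
  qed
  have hint: "integrable (measure_pmf p'') h"
  proof (rule measure_pmf.integrable_const_bound[where B="exp eps"])
    show "AE y in measure_pmf p''. norm (h y) \<le> exp eps" by (rule AE_pmfI) (rule hb)
  qed simp
  have h1: "1 \<le> integral\<^sup>L (measure_pmf p'') h"
  proof -
    have "(\<integral>\<^sup>+y. ennreal (h y) \<partial>measure_pmf p'') = (\<integral>\<^sup>+y. ennreal (pmf p'' y) * ennreal (h y) \<partial>count_space UNIV)"
      by (simp add: nn_integral_measure_pmf)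
    also have "\<dots> = (\<integral>\<^sup>+y. ennreal (1 / m) * ennreal (Q' y) \<partial>count_space UNIV)"
    proof (rule nn_integral_cong)
      fix y
      show "ennreal (pmf p'' y) * ennreal (h y) = ennreal (1 / m) * ennreal (Q' y)"
      proof (cases "pmf p'' y = 0")
        case True
        then have "Q' y = 0" using r2[of y] Q0[of y] by simp
        then show ?thesis using True by (simp add: h_def)
      next
        case False
        then have "pmf p'' y > 0" by (simp add: order.not_eq_order_implies_strict)
        then show ?thesis using m Q0[of y]
          by (simp add: h_def ennreal_mult[symmetric])
      qed
    qed
    also have "\<dots> = ennreal (1 / m) * (\<integral>\<^sup>+y. ennreal (Q' y) \<partial>count_space UNIV)"
      by (simp add: nn_integral_cmult)
    also have "\<dots> \<ge> ennreal (1 / m) * ennreal m" using Qm by (intro mult_left_mono) auto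
    also have "ennreal (1 / m) * ennreal m = 1" using m by (simp add: ennreal_mult[symmetric])
    finally have ge: "1 \<le> (\<integral>\<^sup>+y. ennreal (h y) \<partial>measure_pmf p'')" .
    have "(\<integral>\<^sup>+y. ennreal (h y) \<partial>measure_pmf p'') \<le> (\<integral>\<^sup>+y. ennreal (exp eps) \<partial>measure_pmf p'')"
    proof (rule nn_integral_mono_AE, rule AE_pmfI)
      fix y assume "y \<in> set_pmf p''"
      then have "h y \<le> exp eps" using hb[of y] by simp
      then show "ennreal (h y) \<le> ennreal (exp eps)" by (rule ennreal_leI)
    qed
    then have le2: "(\<integral>\<^sup>+y. ennreal (h y) \<partial>measure_pmf p'') \<le> ennreal (exp eps)"
      by (simp add: measure_pmf.emeasure_space_1)
    have fin: "(\<integral>\<^sup>+y. ennreal (h y) \<partial>measure_pmf p'') < \<top>"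
    proof (rule ccontr)
      assume "\<not> ?thesis"
      then have "(\<integral>\<^sup>+y. ennreal (h y) \<partial>measure_pmf p'') = \<top>" using top.not_eq_extremum by blast
      then show False using le2 by (simp add: top_unique)
    qed
    have h0: "AE y in measure_pmf p''. 0 \<le> h y"
    proof (rule AE_pmfI)
      fix y show "0 \<le> h y" unfolding h_def using m Q0[of y] by (intro divide_nonneg_nonneg) auto
    qed
    have "integral\<^sup>L (measure_pmf p'') h = enn2real (\<integral>\<^sup>+y. ennreal (h y) \<partial>measure_pmf p'')"
      by (rule integral_eq_nn_integral) (simp_all add: h0)
    moreover have "enn2real 1 \<le> enn2real (\<integral>\<^sup>+y. ennreal (h y) \<partial>measure_pmf p'')"
      using ge fin by (rule enn2real_mono)
    ultimately show ?thesis by simp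
  qed
  have Eb: "integral\<^sup>L (measure_pmf p'') l \<le> K"
  proof -
    have "integral\<^sup>L (measure_pmf p'') l \<le> integral\<^sup>L (measure_pmf p'') (\<lambda>y. K + 1 - h y)"
      by (rule integral_mono_AE) (auto intro!: AE_pmfI lb hint B.integrable)
    also have "\<dots> = K + 1 - integral\<^sup>L (measure_pmf p'') h"
      using hint by (simp add: measure_pmf.prob_space)
    finally show ?thesis using h1 by simp
  qed
  have HL: "(\<integral>\<^sup>+y. ennreal (exp (lam * (l y - integral\<^sup>L (measure_pmf p'') l))) \<partial>measure_pmf p'') \<le> ennreal (exp (lam\<^sup>2 * (eps - - eps)\<^sup>2 / 8))"
    by (rule B.Hoeffdings_lemma_nn_integral[OF lam])
  have "(\<integral>\<^sup>+y. ennreal ((m * pmf p'' y / Q' y) powr lam) \<partial>measure_pmf p'')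
      = (\<integral>\<^sup>+y. ennreal (exp (lam * integral\<^sup>L (measure_pmf p'') l)) * ennreal (exp (lam * (l y - integral\<^sup>L (measure_pmf p'') l))) \<partial>measure_pmf p'')"
  proof (rule nn_integral_cong_AE, rule AE_pmfI)
    fix y assume y: "y \<in> set_pmf p''"
    have pos: "0 < m * pmf p'' y / Q' y" using supp(1)[OF y] y m by (simp add: pmf_positive)
    show "ennreal ((m * pmf p'' y / Q' y) powr lam) = ennreal (exp (lam * integral\<^sup>L (measure_pmf p'') l)) * ennreal (exp (lam * (l y - integral\<^sup>L (measure_pmf p'') l)))"
    proof -
      define E where "E = integral\<^sup>L (measure_pmf p'') l"
      have "(m * pmf p'' y / Q' y) powr lam = exp (lam * l y)"
      proof -
        have ne: "m * pmf p'' y / Q' y \<noteq> 0" using pos by linarith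
        show ?thesis unfolding powr_def l_def by (rule if_not_P[OF ne])
      qed
      also have "lam * l y = lam * E + lam * (l y - E)" by (simp add: algebra_simps)
      also have "exp (lam * E + lam * (l y - E)) = exp (lam * E) * exp (lam * (l y - E))" by (rule exp_add)
      finally show ?thesis by (simp add: E_def ennreal_mult)
    qed
  qed
  also have "\<dots> = ennreal (exp (lam * integral\<^sup>L (measure_pmf p'') l)) * (\<integral>\<^sup>+y. ennreal (exp (lam * (l y - integral\<^sup>L (measure_pmf p'') l))) \<partial>measure_pmf p'')"
    by (simp add: nn_integral_cmult)
  also have "\<dots> \<le> ennreal (exp (lam * integral\<^sup>L (measure_pmf p'') l)) * ennreal (exp (lam\<^sup>2 * (eps - - eps)\<^sup>2 / 8))"
    using HL by (intro mult_left_mono) auto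
  also have "\<dots> = ennreal (exp (lam * integral\<^sup>L (measure_pmf p'') l + lam\<^sup>2 * eps\<^sup>2 / 2))"
  proof -
    have e: "lam\<^sup>2 * (eps - - eps)\<^sup>2 / 8 = lam\<^sup>2 * eps\<^sup>2 / 2" by (simp add: power2_eq_square field_simps)
    show ?thesis unfolding e exp_add by (simp add: ennreal_mult)
  qed
  also have "\<dots> \<le> ennreal (exp (lam * K + lam\<^sup>2 * eps\<^sup>2 / 2))"
    using Eb lam by (intro ennreal_leI) (simp add: mult_left_mono)
  finally show ?thesis by (simp add: K_def)
qed

lemma prod_mono_ennreal:
  fixes f g :: "'i \<Rightarrow> ennreal"
  shows "(\<And>i. i \<in> A \<Longrightarrow> f i \<le> g i) \<Longrightarrow> prod f A \<le> prod g A"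
proof (induction A rule: infinite_finite_induct)
  case (insert x F)
  then show ?case by (simp add: mult_mono)
qed simp_all

lemma one_minus_prod:
  fixes c :: "nat \<Rightarrow> real"
  assumes "\<And>i. i < n \<Longrightarrow> 0 \<le> c i \<and> c i \<le> 1"
  shows "1 - (\<Prod>i<n. c i) \<le> (\<Sum>i<n. 1 - c i)"
  using assms
proof (induction n)
  case 0 then show ?case by simp
next
  case (Suc n)
  have IH: "1 - (\<Prod>i<n. c i) \<le> (\<Sum>i<n. 1 - c i)" using Suc by simp
  have c: "0 \<le> c n" "c n \<le> 1" using Suc.prems[of n] by auto
  have P: "0 \<le> (\<Prod>i<n. c i)" "(\<Prod>i<n. c i) \<le> 1"
    using Suc.prems by (auto intro!: prod_nonneg prod_le_1)
  have "1 - (\<Prod>i<n. c i) * c n \<le> (1 - (\<Prod>i<n. c i)) + (1 - c n)"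
  proof -
    have "0 \<le> (1 - (\<Prod>i<n. c i)) * (1 - c n)" using c P by simp
    then show ?thesis by (simp add: algebra_simps)
  qed
  then show ?case using IH by simp
qed

lemma pmf_list_map_nth:
  "pmf (pmf_list (map pp [0..<T])) ys = (if length ys = T then (\<Prod>i<T. pmf (pp i) (ys ! i)) else 0)"
  by (simp add: pmf_pmf_list)

lemma nn_integral_pmf_list_prod_map:
  "(\<integral>\<^sup>+ys. (\<Prod>i<T. g i (ys ! i)) \<partial>measure_pmf (pmf_list (map pp [0..<T]))) = (\<Prod>i<T. \<integral>\<^sup>+y. g i y \<partial>measure_pmf (pp i))"
  using nn_integral_pmf_list_prod[of "map pp [0..<T]" g] by simp

lemma supp_pmf_list_map:
  assumes "ys \<in> set_pmf (pmf_list (map pp [0..<T]))"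
  shows "length ys = T" "\<And>i. i < T \<Longrightarrow> ys ! i \<in> set_pmf (pp i)"
proof -
  have la: "list_all2 (\<lambda>y p. y \<in> set_pmf p) ys (map pp [0..<T])" by (rule set_pmf_list[OF assms])
  then show "length ys = T" by (simp add: list_all2_lengthD)
  fix i assume "i < T" then show "ys ! i \<in> set_pmf (pp i)" using la by (auto simp: list_all2_conv_all_nth)
qed

lemma chernoff_arith:
  fixes eps dl :: real and T :: nat
  assumes eps: "eps > 0" and T: "T > 0" and dl: "0 < dl" "dl < 1"
  defines "K \<equiv> eps * (exp eps - 1)"
  defines "s \<equiv> sqrt (2 * real T * ln (1 / dl))"
  defines "lam \<equiv> s / (real T * eps)"
  shows "lam > 0" "exp (- (lam * (K * real T + eps * s))) * exp (lam * K + lam\<^sup>2 * eps\<^sup>2 / 2) ^ T = dl"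
proof -
  have l: "ln (1 / dl) > 0" using dl by simp
  have s0: "s > 0" using l T by (simp add: s_def)
  have s2: "s\<^sup>2 = 2 * real T * ln (1 / dl)" using l T by (simp add: s_def)
  show "lam > 0" using s0 T eps by (simp add: lam_def)
  have "exp (lam * K + lam\<^sup>2 * eps\<^sup>2 / 2) ^ T = exp (real T * (lam * K + lam\<^sup>2 * eps\<^sup>2 / 2))"
    by (simp only: exp_of_nat_mult)
  then have "exp (- (lam * (K * real T + eps * s))) * exp (lam * K + lam\<^sup>2 * eps\<^sup>2 / 2) ^ T
      = exp (- (lam * (K * real T + eps * s)) + real T * (lam * K + lam\<^sup>2 * eps\<^sup>2 / 2))"
    by (simp only: exp_add)
  also have "- (lam * (K * real T + eps * s)) + real T * (lam * K + lam\<^sup>2 * eps\<^sup>2 / 2) = - (s\<^sup>2 / (2 * real T))"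
    using T eps by (simp add: lam_def power2_eq_square field_simps)
  also have "\<dots> = - ln (1 / dl)" using s2 T by simp
  also have "exp (- ln (1 / dl)) = dl" using dl by (simp add: ln_div)
  finally show "exp (- (lam * (K * real T + eps * s))) * exp (lam * K + lam\<^sup>2 * eps\<^sup>2 / 2) ^ T = dl" .
qed

lemma chernoff:
  fixes pp :: "nat \<Rightarrow> 'b pmf" and mm :: "nat \<Rightarrow> real" and QQ :: "nat \<Rightarrow> 'b \<Rightarrow> real"
  assumes eps: "eps > 0" and T: "T > 0" and dl: "0 < dl" "dl < 1"
    and mm: "\<And>i. i < T \<Longrightarrow> 0 < mm i \<and> mm i \<le> 1"
    and Q0: "\<And>i y. i < T \<Longrightarrow> 0 \<le> QQ i y"
    and Qm: "\<And>i. i < T \<Longrightarrow> ennreal (mm i) \<le> (\<integral>\<^sup>+y. ennreal (QQ i y) \<partial>count_space UNIV)"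
    and r1: "\<And>i y. i < T \<Longrightarrow> mm i * pmf (pp i) y \<le> exp eps * QQ i y"
    and r2: "\<And>i y. i < T \<Longrightarrow> QQ i y \<le> exp eps * (mm i * pmf (pp i) y)"
  defines "eps' \<equiv> eps * (exp eps - 1) * real T + eps * sqrt (2 * real T * ln (1 / dl))"
  shows "emeasure (measure_pmf (pmf_list (map pp [0..<T])))
           {ys. length ys = T \<and> (\<Prod>i<T. mm i * pmf (pp i) (ys ! i)) > exp eps' * (\<Prod>i<T. QQ i (ys ! i))} \<le> ennreal dl"
proof -
  define K where "K = eps * (exp eps - 1)"
  define s where "s = sqrt (2 * real T * ln (1 / dl))"
  define lam where "lam = s / (real T * eps)"
  have lam: "lam > 0" and ar: "exp (- (lam * (K * real T + eps * s))) * exp (lam * K + lam\<^sup>2 * eps\<^sup>2 / 2) ^ T = dl"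
    using chernoff_arith[OF eps T dl] unfolding K_def s_def lam_def by auto
  have e': "eps' = K * real T + eps * s" by (simp add: eps'_def K_def s_def)
  define P'' where "P'' = pmf_list (map pp [0..<T])"
  define E where "E = {ys. length ys = T \<and> (\<Prod>i<T. mm i * pmf (pp i) (ys ! i)) > exp eps' * (\<Prod>i<T. QQ i (ys ! i))}"
  define g where "g i y = ennreal ((mm i * pmf (pp i) y / QQ i y) powr lam)" for i y
  define c where "c = exp (- (lam * eps'))"
  have "emeasure (measure_pmf P'') E = (\<integral>\<^sup>+ys. indicator E ys \<partial>measure_pmf P'')" by simp
  also have "\<dots> \<le> (\<integral>\<^sup>+ys. ennreal c * (\<Prod>i<T. g i (ys ! i)) \<partial>measure_pmf P'')"
  proof (rule nn_integral_mono_AE, rule AE_pmfI)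
    fix ys assume ys: "ys \<in> set_pmf P''"
    show "indicator E ys \<le> ennreal c * (\<Prod>i<T. g i (ys ! i))"
    proof (cases "ys \<in> E")
      case False then show ?thesis by simp
    next
      case True
      have supp: "ys ! i \<in> set_pmf (pp i)" if "i < T" for i
        using supp_pmf_list_map(2)[OF ys[unfolded P''_def] that] .
      have num: "0 < mm i * pmf (pp i) (ys ! i)" if "i < T" for i
        using mm[OF that] supp[OF that] by (simp add: pmf_positive)
      have den: "0 < QQ i (ys ! i)" if "i < T" for i
      proof -
        have "0 < exp eps * QQ i (ys ! i)" using num[OF that] r1[OF that, of "ys ! i"] by linarith
        then show ?thesis by (simp add: zero_less_mult_iff)
      qed
      define r where "r i = mm i * pmf (pp i) (ys ! i) / QQ i (ys ! i)" for i
      have r0: "0 < r i" if "i < T" for i using num[OF that] den[OF that] by (simp add: r_def)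
      have prodr: "(\<Prod>i<T. r i) = (\<Prod>i<T. mm i * pmf (pp i) (ys ! i)) / (\<Prod>i<T. QQ i (ys ! i))"
        by (simp add: r_def prod_dividef)
      have Qpos: "0 < (\<Prod>i<T. QQ i (ys ! i))" by (rule prod_pos) (use den in auto)
      have "exp eps' < (\<Prod>i<T. r i)"
        using True Qpos unfolding prodr E_def by (simp add: pos_less_divide_eq)
      then have "exp eps' powr lam \<le> (\<Prod>i<T. r i) powr lam"
        using lam by (intro powr_mono2) auto
      moreover have "exp eps' powr lam = exp (lam * eps')" by (simp add: powr_def mult.commute)
      moreover have "(\<Prod>i<T. r i) powr lam = (\<Prod>i<T. r i powr lam)" by (rule prod_powr_distrib)
      ultimately have "exp (lam * eps') \<le> (\<Prod>i<T. r i powr lam)" by simp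
      then have "1 \<le> c * (\<Prod>i<T. r i powr lam)"
        by (simp add: c_def exp_minus field_simps)
      moreover have "ennreal c * (\<Prod>i<T. g i (ys ! i)) = ennreal (c * (\<Prod>i<T. r i powr lam))"
        by (simp add: g_def r_def prod_ennreal c_def ennreal_mult prod_nonneg)
      ultimately show ?thesis using True by (simp add: ennreal_leI)
    qed
  qed
  also have "\<dots> = ennreal c * (\<Prod>i<T. \<integral>\<^sup>+y. g i y \<partial>measure_pmf (pp i))"
    by (simp add: nn_integral_cmult P''_def nn_integral_pmf_list_prod_map)
  also have "\<dots> \<le> ennreal c * (\<Prod>i<T. ennreal (exp (lam * K + lam\<^sup>2 * eps\<^sup>2 / 2)))"
  proof (intro mult_left_mono prod_mono_ennreal)
    fix i assume "i \<in> {..<T}" then have i: "i < T" by simp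
    show "(\<integral>\<^sup>+y. g i y \<partial>measure_pmf (pp i)) \<le> ennreal (exp (lam * K + lam\<^sup>2 * eps\<^sup>2 / 2))"
      unfolding g_def K_def
      by (rule hoef) (use eps mm[OF i] Q0[OF i] Qm[OF i] r1[OF i] r2[OF i] lam in auto)
  qed simp
  also have "\<dots> = ennreal dl"
  proof -
    have "ennreal c * (\<Prod>i<T. ennreal (exp (lam * K + lam\<^sup>2 * eps\<^sup>2 / 2)))
        = ennreal (exp (- (lam * (K * real T + eps * s)))) * ennreal (exp (lam * K + lam\<^sup>2 * eps\<^sup>2 / 2)) ^ T"
      by (simp add: c_def e')
    also have "\<dots> = ennreal (exp (- (lam * (K * real T + eps * s))) * exp (lam * K + lam\<^sup>2 * eps\<^sup>2 / 2) ^ T)"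
      by (simp add: ennreal_mult ennreal_power)
    finally show ?thesis using ar by simp
  qed
  finally show ?thesis by (simp add: P''_def E_def)
qed

lemma emeasure_bind_count:
  "emeasure (measure_pmf (bind_pmf P K)) S = (\<integral>\<^sup>+z. ennreal (pmf P z * measure_pmf.prob (K z) S) \<partial>count_space UNIV)"
proof -
  have "emeasure (measure_pmf (bind_pmf P K)) S = (\<integral>\<^sup>+z. ennreal (measure_pmf.prob (K z) S) \<partial>measure_pmf P)"
    by (rule trans[OF emeasure_bind_pmf]) (simp add: measure_pmf.emeasure_eq_measure)
  also have "\<dots> = (\<integral>\<^sup>+z. ennreal (pmf P z * measure_pmf.prob (K z) S) \<partial>count_space UNIV)"
    by (simp add: nn_integral_measure_pmf ennreal_mult)
  finally show ?thesis .
qed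

lemma core:
  fixes ps qs :: "'b pmf list" and K :: "'b list \<Rightarrow> 'c pmf" and T :: nat
  assumes len: "length ps = T" "length qs = T" and eps: "eps \<ge> 0" and dl: "dl > 0"
    and dp1: "\<And>i S. i < T \<Longrightarrow> measure_pmf.prob (ps ! i) S \<le> exp eps * measure_pmf.prob (qs ! i) S + \<delta>"
    and dp2: "\<And>i S. i < T \<Longrightarrow> measure_pmf.prob (qs ! i) S \<le> exp eps * measure_pmf.prob (ps ! i) S + \<delta>"
  shows "measure_pmf.prob (bind_pmf (pmf_list ps) K) S
     \<le> exp (eps * (exp eps - 1) * real T + eps * sqrt (2 * real T * ln (1 / dl))) * measure_pmf.prob (bind_pmf (pmf_list qs) K) S + (dl + real T * \<delta>)"
proof -
  define eps' where "eps' = eps * (exp eps - 1) * real T + eps * sqrt (2 * real T * ln (1 / dl))"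
  have d0: "0 \<le> \<delta>" if "T > 0" using dp1[OF that, of "{}"] by simp
  have Td0: "0 \<le> real T * \<delta>" using d0 by (cases "T = 0") auto
  have rhs0: "0 \<le> exp eps' * measure_pmf.prob (bind_pmf (pmf_list qs) K) S" by simp
  show ?thesis
  proof (cases "dl \<ge> 1 \<or> (T > 0 \<and> \<delta> \<ge> 1)")
    case True
    have "1 \<le> dl + real T * \<delta>"
    proof (cases "dl \<ge> 1")
      case True then show ?thesis using Td0 by linarith
    next
      case False
      then have "T > 0" "\<delta> \<ge> 1" using \<open>dl \<ge> 1 \<or> (T > 0 \<and> \<delta> \<ge> 1)\<close> by auto
      then have "\<delta> \<le> real T * \<delta>" by (simp add: mult_le_cancel_right1)
      then show ?thesis using dl \<open>\<delta> \<ge> 1\<close> by linarith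
    qed
    moreover have "measure_pmf.prob (bind_pmf (pmf_list ps) K) S \<le> 1" by simp
    ultimately show ?thesis using rhs0 unfolding eps'_def by linarith
  next
    case False
    then have dl1: "dl < 1" and dlt: "\<And>i. i < T \<Longrightarrow> \<delta> < 1" by auto
    define Prop where "Prop i t \<longleftrightarrow> (case t of (m, p'', Q') \<Rightarrow>
      0 < m \<and> m \<le> 1 \<and> 1 - \<delta> \<le> m \<and> (\<forall>y. 0 \<le> Q' y \<and> Q' y \<le> pmf (qs ! i) y)
     \<and> ennreal m \<le> (\<integral>\<^sup>+y. ennreal (Q' y) \<partial>count_space UNIV)
     \<and> (\<forall>y. m * pmf p'' y \<le> pmf (ps ! i) y \<and> m * pmf p'' y \<le> exp eps * Q' y \<and> Q' y \<le> exp eps * (m * pmf p'' y)))" for i t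
    have "\<forall>i\<in>{..<T}. \<exists>t. Prop i t"
    proof
      fix i assume "i \<in> {..<T}" then have i: "i < T" by simp
      obtain m p'' Q' where "0 < m \<and> m \<le> 1 \<and> 1 - \<delta> \<le> m \<and> (\<forall>y. 0 \<le> Q' y \<and> Q' y \<le> pmf (qs ! i) y)
     \<and> ennreal m \<le> (\<integral>\<^sup>+y. ennreal (Q' y) \<partial>count_space UNIV)
     \<and> (\<forall>y. m * pmf p'' y \<le> pmf (ps ! i) y \<and> m * pmf p'' y \<le> exp eps * Q' y \<and> Q' y \<le> exp eps * (m * pmf p'' y))"
        using trim[OF eps dlt[OF i] dp1[OF i] dp2[OF i]] by blast
      then show "\<exists>t. Prop i t" unfolding Prop_def by (intro exI[of _ "(m, p'', Q')"]) simp
    qed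
    then obtain f where f: "\<And>i. i < T \<Longrightarrow> Prop i (f i)" using bchoice[of "{..<T}" Prop] by auto
    define mm where "mm i = fst (f i)" for i
    define pp where "pp i = fst (snd (f i))" for i
    define QQ where "QQ i = snd (snd (f i))" for i
    have H: "0 < mm i \<and> mm i \<le> 1 \<and> 1 - \<delta> \<le> mm i \<and> (\<forall>y. 0 \<le> QQ i y \<and> QQ i y \<le> pmf (qs ! i) y)
     \<and> ennreal (mm i) \<le> (\<integral>\<^sup>+y. ennreal (QQ i y) \<partial>count_space UNIV)
     \<and> (\<forall>y. mm i * pmf (pp i) y \<le> pmf (ps ! i) y \<and> mm i * pmf (pp i) y \<le> exp eps * QQ i y \<and> QQ i y \<le> exp eps * (mm i * pmf (pp i) y))"
      if "i < T" for i
      using f[OF that] unfolding Prop_def mm_def pp_def QQ_def by (simp split: prod.splits)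
    define P where "P = pmf_list ps"
    define Q where "Q = pmf_list qs"
    define P'' where "P'' = pmf_list (map pp [0..<T])"
    define M where "M = (\<Prod>i<T. mm i)"
    define Pp where "Pp ys = (if length ys = T then (\<Prod>i<T. mm i * pmf (pp i) (ys ! i)) else 0)" for ys
    define Qp where "Qp ys = (if length ys = T then (\<Prod>i<T. QQ i (ys ! i)) else 0)" for ys
    define fr where "fr z = measure_pmf.prob (K z) S" for z
    define E where "E = {ys. length ys = T \<and> (\<Prod>i<T. mm i * pmf (pp i) (ys ! i)) > exp eps' * (\<Prod>i<T. QQ i (ys ! i))}"
    have fr01: "0 \<le> fr z" "fr z \<le> 1" for z by (simp_all add: fr_def)
    have M01: "0 < M" "M \<le> 1"
    proof -
      show "0 < M" unfolding M_def by (rule prod_pos) (use H in auto)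
      show "M \<le> 1" unfolding M_def by (rule prod_le_1) (use H in \<open>auto intro: less_imp_le\<close>)
    qed
    have PP: "Pp ys = M * pmf P'' ys" for ys
      by (simp add: Pp_def M_def P''_def pmf_list_map_nth prod.distrib)
    have Pp0: "0 \<le> Pp ys" for ys using M01 by (simp add: PP)
    have Qp0: "0 \<le> Qp ys" for ys using H by (auto simp: Qp_def intro!: prod_nonneg)
    have Pa: "Pp ys \<le> pmf P ys" for ys
    proof (cases "length ys = T")
      case True
      have "(\<Prod>i<T. mm i * pmf (pp i) (ys ! i)) \<le> (\<Prod>i<T. pmf (ps ! i) (ys ! i))"
      proof (rule prod_mono)
        fix i assume "i \<in> {..<T}"
        then have "i < T" by simp
        from H[OF this] show "0 \<le> mm i * pmf (pp i) (ys ! i) \<and> mm i * pmf (pp i) (ys ! i) \<le> pmf (ps ! i) (ys ! i)"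
          by auto
      qed
      then show ?thesis using True by (simp add: Pp_def P_def pmf_pmf_list len)
    qed (simp add: Pp_def)
    have Qb: "Qp ys \<le> pmf Q ys" for ys
    proof (cases "length ys = T")
      case True
      have "(\<Prod>i<T. QQ i (ys ! i)) \<le> (\<Prod>i<T. pmf (qs ! i) (ys ! i))"
      proof (rule prod_mono)
        fix i assume "i \<in> {..<T}"
        then have "i < T" by simp
        from H[OF this] show "0 \<le> QQ i (ys ! i) \<and> QQ i (ys ! i) \<le> pmf (qs ! i) (ys ! i)"
          by auto
      qed
      then show ?thesis using True by (simp add: Qp_def Q_def pmf_pmf_list len)
    qed (simp add: Qp_def)
    have notE: "Pp ys \<le> exp eps' * Qp ys" if "ys \<notin> E" for ys
      using that Qp0[of ys] by (auto simp: E_def Pp_def Qp_def not_less)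
    have EP: "emeasure (measure_pmf P'') E \<le> ennreal dl"
    proof (cases "T > 0 \<and> eps > 0")
      case True
      show ?thesis unfolding P''_def E_def eps'_def
        by (rule chernoff) (use True dl dl1 H in auto)
    next
      case False
      have "E = {}"
      proof -
        have "\<not> (\<Prod>i<T. mm i * pmf (pp i) (ys ! i)) > exp eps' * (\<Prod>i<T. QQ i (ys ! i))" for ys
        proof (cases "T = 0")
          case True then show ?thesis by (simp add: eps'_def)
        next
          case False
          then have e0: "eps = 0" using \<open>\<not> (T > 0 \<and> eps > 0)\<close> eps by auto
          have "(\<Prod>i<T. mm i * pmf (pp i) (ys ! i)) \<le> (\<Prod>i<T. QQ i (ys ! i))"
          proof (rule prod_mono)
            fix i assume "i \<in> {..<T}"
            then have "i < T" by simp
            from H[OF this] e0 show "0 \<le> mm i * pmf (pp i) (ys ! i) \<and> mm i * pmf (pp i) (ys ! i) \<le> QQ i (ys ! i)"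
              by auto
          qed
          then show ?thesis by (simp add: eps'_def e0)
        qed
        then show ?thesis by (auto simp: E_def)
      qed
      then show ?thesis by simp
    qed
    have mass: "(\<integral>\<^sup>+z. ennreal (Pp z) \<partial>count_space UNIV) = ennreal M"
    proof -
      have "(\<integral>\<^sup>+z. ennreal (Pp z) \<partial>count_space UNIV) = (\<integral>\<^sup>+z. ennreal M * ennreal (pmf P'' z) \<partial>count_space UNIV)"
        using M01 by (intro nn_integral_cong) (simp add: PP ennreal_mult)
      also have "\<dots> = ennreal M" by (simp add: nn_integral_cmult nn_pmf_one)
      finally show ?thesis .
    qed
    have diff: "(\<integral>\<^sup>+z. ennreal (pmf P z - Pp z) \<partial>count_space UNIV) \<le> ennreal (1 - M)"
    proof -
      have "(\<integral>\<^sup>+z. ennreal (pmf P z - Pp z) \<partial>count_space UNIV) + ennreal M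
          = (\<integral>\<^sup>+z. ennreal (pmf P z - Pp z) + ennreal (Pp z) \<partial>count_space UNIV)"
        by (simp add: nn_integral_add mass)
      also have "\<dots> = (\<integral>\<^sup>+z. ennreal (pmf P z) \<partial>count_space UNIV)"
        using Pa Pp0 by (intro nn_integral_cong) (simp add: ennreal_plus[symmetric] del: ennreal_plus)
      also have "\<dots> = 1" by (rule nn_pmf_one)
      finally have eq: "(\<integral>\<^sup>+z. ennreal (pmf P z - Pp z) \<partial>count_space UNIV) + ennreal M = 1" .
      then have "(\<integral>\<^sup>+z. ennreal (pmf P z - Pp z) \<partial>count_space UNIV) \<le> 1" by (metis le_iff_add)
      then obtain x where x: "(\<integral>\<^sup>+z. ennreal (pmf P z - Pp z) \<partial>count_space UNIV) = ennreal x" "0 \<le> x"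
        by (metis ennreal_cases top.extremum_uniqueI ennreal_one_neq_top)
      have "ennreal (x + M) = ennreal 1" using eq x M01 by (simp add: ennreal_plus)
      then have "x + M = 1" using x M01 by (subst (asm) ennreal_inj) auto
      then show ?thesis using x by simp
    qed
    have oneM: "1 - M \<le> real T * \<delta>"
    proof -
      have Hm: "0 \<le> mm i \<and> mm i \<le> 1" if "i < T" for i using H[OF that] by auto
      have Hd: "1 - mm i \<le> \<delta>" if "i < T" for i using H[OF that] by auto
      have "1 - M \<le> (\<Sum>i<T. 1 - mm i)" unfolding M_def by (rule one_minus_prod) (rule Hm)
      also have "\<dots> \<le> (\<Sum>i<T. \<delta>)" using Hd by (intro sum_mono) auto
      finally show ?thesis by simp
    qed
    have step1: "emeasure (measure_pmf (bind_pmf P K)) S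
        \<le> (\<integral>\<^sup>+z. ennreal (Pp z * fr z) \<partial>count_space UNIV) + (\<integral>\<^sup>+z. ennreal (pmf P z - Pp z) \<partial>count_space UNIV)"
    proof -
      have "emeasure (measure_pmf (bind_pmf P K)) S = (\<integral>\<^sup>+z. ennreal (pmf P z * fr z) \<partial>count_space UNIV)"
        unfolding fr_def by (rule emeasure_bind_count)
      also have "\<dots> \<le> (\<integral>\<^sup>+z. ennreal (Pp z * fr z) + ennreal (pmf P z - Pp z) \<partial>count_space UNIV)"
      proof (rule nn_integral_mono)
        fix z
        have "pmf P z * fr z = Pp z * fr z + (pmf P z - Pp z) * fr z" by (simp add: algebra_simps)
        also have "\<dots> \<le> Pp z * fr z + (pmf P z - Pp z)"
          using Pa[of z] fr01[of z] by (simp add: mult_left_le)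
        finally have "ennreal (pmf P z * fr z) \<le> ennreal (Pp z * fr z + (pmf P z - Pp z))" by (rule ennreal_leI)
        also have "\<dots> = ennreal (Pp z * fr z) + ennreal (pmf P z - Pp z)"
          using Pa[of z] Pp0[of z] fr01[of z] by (intro ennreal_plus) auto
        finally show "ennreal (pmf P z * fr z) \<le> ennreal (Pp z * fr z) + ennreal (pmf P z - Pp z)" .
      qed
      also have "\<dots> = (\<integral>\<^sup>+z. ennreal (Pp z * fr z) \<partial>count_space UNIV) + (\<integral>\<^sup>+z. ennreal (pmf P z - Pp z) \<partial>count_space UNIV)"
        by (simp add: nn_integral_add)
      finally show ?thesis .
    qed
    have step2: "(\<integral>\<^sup>+z. ennreal (Pp z * fr z) \<partial>count_space UNIV)
        \<le> ennreal (exp eps') * emeasure (measure_pmf (bind_pmf Q K)) S + ennreal dl"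
    proof -
      have "(\<integral>\<^sup>+z. ennreal (Pp z * fr z) \<partial>count_space UNIV)
          \<le> (\<integral>\<^sup>+z. ennreal (exp eps') * ennreal (pmf Q z * fr z) + ennreal M * (ennreal (pmf P'' z) * indicator E z) \<partial>count_space UNIV)"
      proof (rule nn_integral_mono)
        fix z
        show "ennreal (Pp z * fr z) \<le> ennreal (exp eps') * ennreal (pmf Q z * fr z) + ennreal M * (ennreal (pmf P'' z) * indicator E z)"
        proof (cases "z \<in> E")
          case True
          have "Pp z * fr z \<le> Pp z" using Pp0[of z] fr01[of z] by (simp add: mult_left_le)
          then have "ennreal (Pp z * fr z) \<le> ennreal M * (ennreal (pmf P'' z) * indicator E z)"
            using True M01 by (simp add: PP ennreal_mult[symmetric] ennreal_leI)
          then show ?thesis by (simp add: add_increasing)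
        next
          case False
          have "Pp z * fr z \<le> exp eps' * Qp z * fr z" using notE[OF False] fr01[of z] by (simp add: mult_right_mono)
          also have "\<dots> \<le> exp eps' * (pmf Q z * fr z)" using Qb[of z] fr01[of z] by (simp add: mult_right_mono)
          finally have "ennreal (Pp z * fr z) \<le> ennreal (exp eps') * ennreal (pmf Q z * fr z)"
            using fr01[of z] by (simp add: ennreal_mult[symmetric] ennreal_leI)
          then show ?thesis by (simp add: add_increasing2)
        qed
      qed
      also have "\<dots> = ennreal (exp eps') * (\<integral>\<^sup>+z. ennreal (pmf Q z * fr z) \<partial>count_space UNIV)
          + ennreal M * (\<integral>\<^sup>+z. ennreal (pmf P'' z) * indicator E z \<partial>count_space UNIV)"
        by (simp add: nn_integral_add nn_integral_cmult)
      also have "(\<integral>\<^sup>+z. ennreal (pmf Q z * fr z) \<partial>count_space UNIV) = emeasure (measure_pmf (bind_pmf Q K)) S"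
        unfolding fr_def by (rule emeasure_bind_count[symmetric])
      also have "(\<integral>\<^sup>+z. ennreal (pmf P'' z) * indicator E z \<partial>count_space UNIV) = emeasure (measure_pmf P'') E"
        by (simp add: nn_integral_measure_pmf[symmetric])
      also have "ennreal M * emeasure (measure_pmf P'') E \<le> 1 * ennreal dl"
        using EP M01 by (intro mult_mono) auto
      finally show ?thesis by (simp add: add_left_mono)
    qed
    have "ennreal (measure_pmf.prob (bind_pmf P K) S) \<le>
        ennreal (exp eps') * ennreal (measure_pmf.prob (bind_pmf Q K) S) + ennreal dl + ennreal (real T * \<delta>)"
    proof -
      have "ennreal (measure_pmf.prob (bind_pmf P K) S) = emeasure (measure_pmf (bind_pmf P K)) S"
        by (simp add: measure_pmf.emeasure_eq_measure)
      also have "\<dots> \<le> ennreal (exp eps') * emeasure (measure_pmf (bind_pmf Q K)) S + ennreal dl + ennreal (1 - M)"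
        using step1 step2 diff by (meson add_mono order_trans)
      also have "\<dots> \<le> ennreal (exp eps') * emeasure (measure_pmf (bind_pmf Q K)) S + ennreal dl + ennreal (real T * \<delta>)"
        using oneM by (intro add_left_mono ennreal_leI)
      finally show ?thesis by (simp add: measure_pmf.emeasure_eq_measure)
    qed
    also have "\<dots> = ennreal (exp eps' * measure_pmf.prob (bind_pmf Q K) S + (dl + real T * \<delta>))"
      using dl Td0 by (simp add: ennreal_mult ennreal_plus add.assoc)
    finally have "measure_pmf.prob (bind_pmf P K) S \<le> exp eps' * measure_pmf.prob (bind_pmf Q K) S + (dl + real T * \<delta>)"
      using dl Td0 by (subst (asm) ennreal_le_iff) auto
    then show ?thesis by (simp add: P_def Q_def eps'_def)
  qed
qed

lemma neighbours_sym: "neighbours X X' \<Longrightarrow> neighbours X' X"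
  unfolding neighbours_def by (metis)

theorem lemma3p6:
  fixes R :: "nat \<Rightarrow> 'x \<Rightarrow> 'y list pmf" and n m T :: nat and eps delta delta' :: real
  assumes "eps \<ge> 0"
    and "\<And>t x. t < T \<Longrightarrow> set_pmf (R t x) \<subseteq> {ys. length ys = m}"
    and "\<And>t. t < T \<Longrightarrow> shuffled_dp n (R t) eps delta"
    and "delta' > 0"
  shows "shuffled_dp n (compose_rand R T)
           (eps * (exp eps - 1) * real T + eps * sqrt (2 * real T * ln (1 / delta')))
           (delta' + real T * delta)"
  unfolding shuffled_dp_def diff_private_def
proof (intro allI impI)
  fix X X' :: "'x list" and S :: "'y list set"
  assume X: "length X = n" and nb: "neighbours X X'"
  have X': "length X' = n" using nb X by (simp add: neighbours_def)
  have nb': "neighbours X' X" using nb by (rule neighbours_sym)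
  show "measure_pmf.prob (shuffled (compose_rand R T) X) S
      \<le> exp (eps * (exp eps - 1) * real T + eps * sqrt (2 * real T * ln (1 / delta'))) *
         measure_pmf.prob (shuffled (compose_rand R T) X') S + (delta' + real T * delta)"
    unfolding shuffled_compose
  proof (rule core)
    show "length (map (\<lambda>t. shuffled (R t) X) [0..<T]) = T" by simp
    show "length (map (\<lambda>t. shuffled (R t) X') [0..<T]) = T" by simp
    show "eps \<ge> 0" "delta' > 0" using assms by auto
    fix i :: nat and A :: "'y list set" assume i: "i < T"
    have dp: "diff_private n (shuffled (R i)) eps delta" using assms(3)[OF i] by (simp add: shuffled_dp_def)
    show "measure_pmf.prob (map (\<lambda>t. shuffled (R t) X) [0..<T] ! i) A
        \<le> exp eps * measure_pmf.prob (map (\<lambda>t. shuffled (R t) X') [0..<T] ! i) A + delta"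
      using dp X nb i unfolding diff_private_def by simp
    show "measure_pmf.prob (map (\<lambda>t. shuffled (R t) X') [0..<T] ! i) A
        \<le> exp eps * measure_pmf.prob (map (\<lambda>t. shuffled (R t) X) [0..<T] ! i) A + delta"
      using dp X' nb' i unfolding diff_private_def by simp
  qed
qed

end
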